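(* Let $m\ge 2$, $d\ge1$ be integers, $n=md$, $a,c>0$. Let $G$ be the $n\times n$ matrix with $G_{ij}=\frac{n^2-1-6|i-j|(n-|i-j|)}{12cn}$ and let $s=-a\sum_{k=1}^m e_{1+(k-1)d}\in\mathbb R^n$. Then for all $i=1,\dots,d$ and $k=1,\dots,m$, $$(Gs)_{i+(k-1)d}=\mathsf n_i:=-\frac{a}{12cn}\Bigl(n(6+d)+5m+6mi(i-d-2)\Bigr),$$ i.e. $Gs$ is the vector $(\mathsf n,\mathsf n,\dots,\mathsf n)$ consisting of $m$ copies of $\mathsf n=(\mathsf n_1,\dots,\mathsf n_d)$. Moreover, with $\Pi$ the $n\times\binom m2$ matrix whose columns are $\sqrt{a/m}\,(e_{1+(i-1)d}-e_{1+(j-1)d})$, $1\le i<j\le m$, and $M=G-G\Pi(I+\Pi^\top G\Pi)^{-1}\Pi^\top G$, one has $Ms=Gs$.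
   Context: $e_j$ is the $j$-th standard basis vector of $\mathbb R^n$; $I$ is the identity of size $\binom m2$. ($G$ is the group inverse of the Laplacian of the $n$-cycle with all conductances $c$.) *)

theory Defs
  imports "Jordan_Normal_Form.Matrix"
begin

(* All matrices/vectors are Jordan_Normal_Form objects, indexed from 0.
   Paper index p (1-based) corresponds to index p-1 here. *)

definition Gmat :: "real \<Rightarrow> nat \<Rightarrow> nat \<Rightarrow> real mat" where
  "Gmat c m d = (let n = m * d in
     mat n n (\<lambda>(i, j). let t = \<bar>real i - real j\<bar> in
        (real n ^ 2 - 1 - 6 * t * (real n - t)) / (12 * c * real n)))"

definition svec :: "real \<Rightarrow> nat \<Rightarrow> nat \<Rightarrow> real vec" where
  "svec a m d = vec (m * d) (\<lambda>r. if \<exists>k<m. r = k * d then - a else 0)"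

definition pairs_list :: "nat \<Rightarrow> (nat \<times> nat) list" where
  "pairs_list m = [(i, j). i \<leftarrow> [0..<m], j \<leftarrow> [Suc i..<m]]"

definition Pimat :: "real \<Rightarrow> nat \<Rightarrow> nat \<Rightarrow> real mat" where
  "Pimat a m d = mat (m * d) (m choose 2) (\<lambda>(r, col).
     (case pairs_list m ! col of (i, j) \<Rightarrow>
        sqrt (a / real m) * (unit_vec (m * d) (i * d) $ r - unit_vec (m * d) (j * d) $ r)))"

(* the quantity n_i of the paper (i 1-based) *)
definition nval :: "real \<Rightarrow> real \<Rightarrow> nat \<Rightarrow> nat \<Rightarrow> nat \<Rightarrow> real" where
  "nval a c m d i = - a / (12 * c * real (m * d)) *
     (real (m * d) * (6 + real d) + 5 * real m + 6 * real m * real i * (real i - real d - 2))"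

end

theory Submission
  imports Defs "Jordan_Normal_Form.Determinant"
begin

lemma sum_lt_twice: "2 * (\<Sum>i<m. i) = m * (m - 1::nat)"
proof (induction m)
  case (Suc m) thus ?case by (cases m) (auto simp: algebra_simps)
qed simp

lemma length_pairs_list: "length (pairs_list m) = m choose 2"
proof -
  have "length (pairs_list m) = (\<Sum>i<m. m - Suc i)"
    by (simp add: pairs_list_def length_concat o_def sum_set_upt_conv_sum_list_nat[symmetric] atLeast0LessThan)
  also have "\<dots> = (\<Sum>i<m. i)" by (rule sum.nat_diff_reindex)
  also have "\<dots> = m choose 2" using sum_lt_twice[of m] by (simp add: choose_two)
  finally show ?thesis .
qed

lemma set_pairs_list: "set (pairs_list m) = {(i,j). i < j \<and> j < m}"
  by (auto simp: pairs_list_def image_iff)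

lemma pairs_nth: assumes "cc < m choose 2"
  shows "fst (pairs_list m ! cc) < snd (pairs_list m ! cc) \<and> snd (pairs_list m ! cc) < m"
proof -
  have "pairs_list m ! cc \<in> set (pairs_list m)" using assms length_pairs_list by auto
  thus ?thesis by (auto simp: set_pairs_list)
qed

lemma sum_poly: "6 * (\<Sum>j<m. A + B * real j + C * real j ^ 2) =
   6 * A * real m + B * (3 * real m * (real m - 1)) + C * ((real m - 1) * real m * (2 * real m - 1))"
  by (induction m) (auto simp: algebra_simps power2_eq_square)

lemma sum_ind: "(\<Sum>e<n. if x \<le> e \<and> e < y then 1 else 0 :: real) = real (min y n - x)"
  by (induction n) (auto simp: min_def)

lemma sq_diff_expand:
  fixes u f :: "nat \<Rightarrow> real"
  shows "(\<Sum>x<n. \<Sum>y<n. u x * u y * (f x - f y)^2) =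
     2 * (\<Sum>x<n. u x) * (\<Sum>x<n. u x * f x ^2) - 2 * (\<Sum>x<n. u x * f x)^2"
proof -
  have "(\<Sum>x<n. \<Sum>y<n. u x * u y * (f x - f y)^2) =
     (\<Sum>x<n. \<Sum>y<n. (u x * f x ^ 2) * u y + u x * (u y * f y ^ 2) - 2 * ((u x * f x) * (u y * f y)))"
    by (intro sum.cong refl) (simp add: power2_eq_square algebra_simps)
  also have "\<dots> = (\<Sum>x<n. u x * f x ^2) * (\<Sum>x<n. u x) + (\<Sum>x<n. u x) * (\<Sum>x<n. u x * f x ^2)
       - 2 * ((\<Sum>x<n. u x * f x) * (\<Sum>x<n. u x * f x))"
  proof -
    have 1: "(\<Sum>x<n. \<Sum>y<n. (u x * f x ^ 2) * u y) = (\<Sum>x<n. u x * f x ^2) * (\<Sum>x<n. u x)"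
      by (simp add: sum_product)
    have 2: "(\<Sum>x<n. \<Sum>y<n. u x * (u y * f y ^ 2)) = (\<Sum>x<n. u x) * (\<Sum>x<n. u x * f x ^2)"
      by (simp add: sum_product)
    have 3: "(\<Sum>x<n. \<Sum>y<n. ((u x * f x) * (u y * f y))) = ((\<Sum>x<n. u x * f x) * (\<Sum>x<n. u x * f x))"
      by (simp add: sum_product)
    have 3: "(\<Sum>x<n. \<Sum>y<n. 2 * ((u x * f x) * (u y * f y))) = 2 * ((\<Sum>x<n. u x * f x) * (\<Sum>x<n. u x * f x))"
      unfolding 3[symmetric] by (simp add: sum_distrib_left)
    show ?thesis by (simp only: sum.distrib sum_subtractf 1 2 3)
  qed
  finally show ?thesis by (simp add: power2_eq_square algebra_simps)
qed

definition chi :: "nat \<Rightarrow> nat \<Rightarrow> real" where "chi e x = (if x \<le> e then 1 else 0)"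

lemma abs_as_sum: assumes "x < n" "y < n"
  shows "\<bar>real x - real y\<bar> = (\<Sum>e<n. (chi e x - chi e y)^2)"
proof -
  have "(\<Sum>e<n. (chi e x - chi e y)^2) = (\<Sum>e<n. (if x \<le> e \<and> e < y then 1 else 0) + (if y \<le> e \<and> e < x then 1 else 0))"
    by (intro sum.cong refl) (auto simp: chi_def)
  also have "\<dots> = real (min y n - x) + real (min x n - y)"
    by (simp only: sum.distrib sum_ind)
  also have "\<dots> = \<bar>real x - real y\<bar>" using assms by auto
  finally show ?thesis by simp
qed

lemma x_as_sum: assumes "x \<le> n" shows "real x = (\<Sum>e<n. 1 - chi e x)"
proof -
  have "(\<Sum>e<n. 1 - chi e x) = (\<Sum>e<n. if 0 \<le> e \<and> e < x then 1 else 0)"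
    by (intro sum.cong refl) (auto simp: chi_def)
  also have "\<dots> = real x" using assms sum_ind[where x=0 and y=x and n=n] by simp
  finally show ?thesis by simp
qed


lemma quad_nonpos:
  fixes w :: "nat \<Rightarrow> real"
  assumes w0: "(\<Sum>x<n. w x) = 0"
  shows "(\<Sum>x<n. \<Sum>y<n. w x * w y * (\<bar>real x - real y\<bar> * (real n - \<bar>real x - real y\<bar>))) \<le> 0"
proof -
  define W where "W e = (\<Sum>x<n. w x * chi e x)" for e
  define P where "P = (\<Sum>x<n. w x * real x)"
  have A: "(\<Sum>x<n. \<Sum>y<n. w x * w y * (real x - real y)^2) = - 2 * P^2"
    using sq_diff_expand[of w real n] w0 by (simp add: P_def)
  have "(\<Sum>x<n. \<Sum>y<n. w x * w y * \<bar>real x - real y\<bar>)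
      = (\<Sum>x<n. \<Sum>y<n. \<Sum>e<n. w x * w y * (chi e x - chi e y)^2)"
    by (intro sum.cong refl) (simp add: abs_as_sum sum_distrib_left)
  also have "\<dots> = (\<Sum>x<n. \<Sum>e<n. \<Sum>y<n. w x * w y * (chi e x - chi e y)^2)"
    by (rule sum.cong[OF refl], rule sum.swap)
  also have "\<dots> = (\<Sum>e<n. \<Sum>x<n. \<Sum>y<n. w x * w y * (chi e x - chi e y)^2)"
    by (rule sum.swap)
  also have "\<dots> = (\<Sum>e<n. - 2 * W e ^ 2)"
    by (intro sum.cong refl) (simp add: sq_diff_expand w0 W_def)
  finally have B: "(\<Sum>x<n. \<Sum>y<n. w x * w y * \<bar>real x - real y\<bar>) = (\<Sum>e<n. - 2 * W e ^ 2)" .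
  have "P = (\<Sum>x<n. \<Sum>e<n. w x - w x * chi e x)"
    unfolding P_def by (intro sum.cong refl) (simp add: x_as_sum[of _ n] sum_distrib_left right_diff_distrib)
  also have "\<dots> = (\<Sum>e<n. - W e)"
    by (subst sum.swap) (simp add: sum_subtractf w0 W_def)
  finally have Pe: "P = - (\<Sum>e<n. W e)" by (simp add: sum_negf)
  have "0 \<le> (\<Sum>x<n. \<Sum>y<n. 1 * 1 * (W x - W y)^2)"
    by (intro sum_nonneg) auto
  also have "\<dots> = 2 * real n * (\<Sum>e<n. W e ^ 2) - 2 * (\<Sum>e<n. W e)^2"
    using sq_diff_expand[of "\<lambda>_. 1" W n] by simp
  finally have CS: "(\<Sum>e<n. W e)^2 \<le> real n * (\<Sum>e<n. W e ^ 2)" by simp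
  have "(\<Sum>x<n. \<Sum>y<n. w x * w y * (\<bar>real x - real y\<bar> * (real n - \<bar>real x - real y\<bar>)))
     = real n * (\<Sum>x<n. \<Sum>y<n. w x * w y * \<bar>real x - real y\<bar>) - (\<Sum>x<n. \<Sum>y<n. w x * w y * (real x - real y)^2)"
  proof -
    have pt: "w x * w y * (\<bar>real x - real y\<bar> * (real n - \<bar>real x - real y\<bar>))
       = real n * (w x * w y * \<bar>real x - real y\<bar>) - w x * w y * (real x - real y)^2" for x y
    proof -
      have "\<bar>real x - real y\<bar> * \<bar>real x - real y\<bar> = (real x - real y)^2"
        by (simp add: power2_eq_square[symmetric])
      thus ?thesis by (simp add: right_diff_distrib)
    qed
    show ?thesis by (simp only: pt sum_subtractf sum_distrib_left)
  qed
  also have "\<dots> = - 2 * real n * (\<Sum>e<n. W e ^ 2) + 2 * (\<Sum>e<n. W e)^2"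
    unfolding A B Pe by (simp add: sum_distrib_left mult.assoc mult.left_commute)
  finally show ?thesis using CS by simp
qed


lemma mult_vec_sum: assumes "A \<in> carrier_mat nr nc" "v \<in> carrier_vec nc" "i < nr"
  shows "(A *\<^sub>v v) $ i = (\<Sum>j<nc. A $$ (i,j) * v $ j)"
  using assms by (auto simp: mult_mat_vec_def scalar_prod_def atLeast0LessThan)

lemma G_carrier: "Gmat c m d \<in> carrier_mat (m*d) (m*d)"
  by (simp add: Gmat_def Let_def)

lemma G_idx: assumes "x < m*d" "y < m*d"
  shows "Gmat c m d $$ (x,y) = (real (m*d) ^ 2 - 1 - 6 * \<bar>real x - real y\<bar> * (real (m*d) - \<bar>real x - real y\<bar>)) / (12 * c * real (m*d))"
  using assms by (simp add: Gmat_def Let_def)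

lemma s_carrier: "svec a m d \<in> carrier_vec (m*d)"
  by (simp add: svec_def)

lemma Gs_val:
  assumes d: "d \<ge> 1" and i0: "i0 < d" and k0: "k0 < m"
  shows "(Gmat c m d *\<^sub>v svec a m d) $ (i0 + k0 * d) = nval a c m d (Suc i0)"
proof -
  define n where "n = m * d"
  define r where "r = i0 + k0 * d"
  have "Suc k0 * d \<le> m * d" using k0 by (intro mult_le_mono1) auto
  hence rn: "r < n" using i0 unfolding r_def n_def by auto
  define hh where "hh j = (real n ^ 2 - 1 - 6 * real (i0 + j*d) * (real n - real (i0 + j*d))) / (12 * c * real n)" for j
  define \<phi> where "\<phi> l = (if l \<le> k0 then k0 - l else m + k0 - l)" for l
  define S where "S = (\<lambda>l. l * d) ` {..<m}"
  have Sn: "S \<subseteq> {..<n}"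
  proof
    fix x assume "x \<in> S"
    then obtain l where l: "l < m" "x = l * d" unfolding S_def by auto
    have "Suc l * d \<le> m * d" using l by (intro mult_le_mono1) auto
    thus "x \<in> {..<n}" using l d unfolding n_def by auto
  qed
  have "(Gmat c m d *\<^sub>v svec a m d) $ r = (\<Sum>j<n. Gmat c m d $$ (r,j) * svec a m d $ j)"
    using mult_vec_sum[OF G_carrier s_carrier rn[unfolded n_def]] unfolding n_def by simp
  also have "\<dots> = (\<Sum>j<n. if j \<in> S then Gmat c m d $$ (r,j) * (-a) else 0)"
    by (intro sum.cong refl) (auto simp: svec_def S_def n_def)
  also have "\<dots> = (\<Sum>j\<in>{..<n} \<inter> S. Gmat c m d $$ (r,j) * (-a))"
    by (rule sum.inter_restrict[symmetric]) simp
  also have "{..<n} \<inter> S = S" using Sn by auto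
  also have "(\<Sum>j\<in>S. Gmat c m d $$ (r,j) * (-a)) = (\<Sum>l<m. Gmat c m d $$ (r,l*d) * (-a))"
    unfolding S_def using d by (subst sum.reindex) (auto simp: inj_on_def)
  also have "\<dots> = (\<Sum>l<m. hh (\<phi> l) * (-a))"
  proof (intro sum.cong refl)
    fix l assume l: "l \<in> {..<m}"
    have "Suc l * d \<le> m * d" using l by (intro mult_le_mono1) auto
    moreover have "l * d < Suc l * d" using d by simp
    ultimately have ln: "l * d < n" unfolding n_def by linarith
    define T where "T = real (i0 + \<phi> l * d)"
    define t where "t = \<bar>real r - real (l*d)\<bar>"
    have nr: "real n = real m * real d" unfolding n_def by simp
    have "t * (real n - t) = T * (real n - T)"
    proof (cases "l \<le> k0")
      case True
      hence "T = real i0 + (real k0 - real l) * real d" unfolding T_def \<phi>_def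
        by (simp only: if_True of_nat_add of_nat_mult of_nat_diff[OF True])
      moreover have "t = real i0 + (real k0 - real l) * real d"
      proof -
        have "real l * real d \<le> real k0 * real d" using True by (intro mult_right_mono) auto
        thus ?thesis unfolding t_def r_def by (simp add: algebra_simps)
      qed
      ultimately show ?thesis by simp
    next
      case False
      have lm: "l \<le> m + k0" using l by auto
      have "T = real i0 + (real m + real k0 - real l) * real d" unfolding T_def \<phi>_def
        using False by (simp only: if_False of_nat_add of_nat_mult of_nat_diff[OF lm])
      moreover have "t = real l * real d - real k0 * real d - real i0"
      proof -
        have "real (Suc k0) * real d \<le> real l * real d" using False by (intro mult_right_mono) auto
        hence "real r < real l * real d" using i0 unfolding r_def by (simp add: algebra_simps)
        thus ?thesis unfolding t_def r_def by (simp add: algebra_simps)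
      qed
      ultimately have T1: "T = real n - t" unfolding nr by (simp add: algebra_simps)
      hence "real n - T = t" by simp
      thus ?thesis using T1 by (simp only: mult.commute)
    qed
    thus "Gmat c m d $$ (r,l*d) * (-a) = hh (\<phi> l) * (-a)"
      unfolding hh_def G_idx[OF rn[unfolded n_def] ln[unfolded n_def]] T_def t_def n_def
      by (simp add: mult.assoc)
  qed
  also have "\<dots> = (\<Sum>j<m. hh j * (-a))"
  proof (rule sum.reindex_bij_betw)
    have inj: "inj_on \<phi> {..<m}" unfolding inj_on_def \<phi>_def by auto
    moreover have "\<phi> ` {..<m} \<subseteq> {..<m}" unfolding \<phi>_def using k0 by auto
    ultimately have "\<phi> ` {..<m} = {..<m}" by (intro endo_inj_surj) auto
    thus "bij_betw \<phi> {..<m} {..<m}" using inj by (simp add: bij_betw_def)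
  qed
  also have "\<dots> = - a * (\<Sum>j<m. hh j)" by (simp add: sum_distrib_left mult.commute)
  also have "(\<Sum>j<m. hh j) = (\<Sum>j<m. (real n ^ 2 - 1 - 6 * real i0 * (real n - real i0))
        + (- 6 * real d * (real n - 2 * real i0)) * real j + (6 * real d ^ 2) * real j ^ 2) / (12 * c * real n)"
    unfolding hh_def sum_divide_distrib[symmetric]
    by (intro arg_cong[where f="\<lambda>x. x / _"] sum.cong refl) (simp add: algebra_simps power2_eq_square)
  also have "- a * \<dots> = nval a c m d (Suc i0)"
  proof -
    let ?X = "(\<Sum>j<m. (real n ^ 2 - 1 - 6 * real i0 * (real n - real i0))
        + (- 6 * real d * (real n - 2 * real i0)) * real j + (6 * real d ^ 2) * real j ^ 2)"
    have "6 * ?X = 6 * ((real n ^ 2 - 1 - 6 * real i0 * (real n - real i0))) * real m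
       + (- 6 * real d * (real n - 2 * real i0)) * (3 * real m * (real m - 1))
       + (6 * real d ^ 2) * ((real m - 1) * real m * (2 * real m - 1))"
      by (rule sum_poly)
    moreover have "real n = real m * real d" unfolding n_def by simp
    ultimately have X: "?X = real (m*d) * (6 + real d) + 5 * real m + 6 * real m * real (Suc i0) * (real (Suc i0) - real d - 2)"
      by (simp add: algebra_simps power2_eq_square)
    show ?thesis unfolding nval_def X[symmetric] n_def by simp
  qed
  finally show ?thesis unfolding r_def .
qed


lemma P_carrier: "Pimat a m d \<in> carrier_mat (m*d) (m choose 2)"
  by (simp add: Pimat_def)

lemma col_sum:
  assumes d: "d \<ge> 1" and cc: "cc < m choose 2"
  shows "(\<Sum>r<m*d. Pimat a m d $$ (r,cc) * f r)
     = sqrt (a / real m) * (f (fst (pairs_list m ! cc) * d) - f (snd (pairs_list m ! cc) * d))"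
proof -
  obtain i j where ij: "pairs_list m ! cc = (i,j)" by (cases "pairs_list m ! cc")
  have ijm: "i < j" "j < m" using pairs_nth[OF cc] ij by auto
  have lt: "x * d < m * d" if "x < m" for x
  proof -
    have "Suc x * d \<le> m * d" using that by (intro mult_le_mono1) auto
    moreover have "x * d < Suc x * d" using d by simp
    ultimately show ?thesis by linarith
  qed
  have "(\<Sum>r<m*d. Pimat a m d $$ (r,cc) * f r)
     = (\<Sum>r<m*d. sqrt (a / real m) * ((if r = i*d then f r else 0) - (if r = j*d then f r else 0)))"
    by (intro sum.cong refl) (auto simp: Pimat_def ij cc unit_vec_def)
  also have "\<dots> = sqrt (a / real m) * (f (i*d) - f (j*d))"
    using lt[of i] lt[of j] ijm
    by (simp add: sum_distrib_left[symmetric] sum_subtractf)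
  finally show ?thesis using ij by simp
qed

lemma G_quad:
  fixes w :: "nat \<Rightarrow> real"
  assumes w0: "(\<Sum>x<m*d. w x) = 0" and c: "c > 0"
  shows "0 \<le> (\<Sum>x<m*d. (\<Sum>y<m*d. Gmat c m d $$ (x,y) * w y) * w x)"
proof -
  define n where "n = m * d"
  define K1 where "K1 = (real n ^ 2 - 1) / (12 * c * real n)"
  define K2 where "K2 = 6 / (12 * c * real n)"
  define g where "g x y = \<bar>real x - real y\<bar> * (real n - \<bar>real x - real y\<bar>)" for x y :: nat
  have K2: "K2 \<ge> 0" unfolding K2_def using c by simp
  have "(\<Sum>x<m*d. (\<Sum>y<m*d. Gmat c m d $$ (x,y) * w y) * w x)
      = (\<Sum>x<n. \<Sum>y<n. K1 * (w x * w y) - K2 * (w x * w y * g x y))"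
    unfolding n_def[symmetric] sum_distrib_right
  proof (intro sum.cong refl)
    fix x y assume "x \<in> {..<n}" "y \<in> {..<n}"
    hence "x < m*d" "y < m*d" unfolding n_def by auto
    hence "Gmat c m d $$ (x,y) = K1 - K2 * g x y"
      unfolding G_idx[OF \<open>x < m*d\<close> \<open>y < m*d\<close>] K1_def K2_def g_def n_def[symmetric]
      by (simp add: diff_divide_distrib mult.assoc)
    thus "Gmat c m d $$ (x,y) * w y * w x = K1 * (w x * w y) - K2 * (w x * w y * g x y)"
      by (simp add: right_diff_distrib mult_ac)
  qed
  also have "\<dots> = K1 * (\<Sum>x<n. \<Sum>y<n. w x * w y) - K2 * (\<Sum>x<n. \<Sum>y<n. w x * w y * g x y)"
    by (simp add: sum_subtractf sum_distrib_left)
  also have "\<dots> = - K2 * (\<Sum>x<n. \<Sum>y<n. w x * w y * g x y)"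
  proof -
    have "(\<Sum>x<n. \<Sum>y<n. w x * w y) = (\<Sum>x<n. w x) * (\<Sum>x<n. w x)"
      by (simp add: sum_product)
    hence "(\<Sum>x<n. \<Sum>y<n. w x * w y) = 0" using w0 unfolding n_def by simp
    thus ?thesis by simp
  qed
  finally have eq: "(\<Sum>x<m*d. (\<Sum>y<m*d. Gmat c m d $$ (x,y) * w y) * w x) = - K2 * (\<Sum>x<n. \<Sum>y<n. w x * w y * g x y)" .
  have "(\<Sum>x<n. \<Sum>y<n. w x * w y * g x y) \<le> 0"
    unfolding g_def by (rule quad_nonpos) (use w0 n_def in simp)
  with K2 show ?thesis unfolding eq by (simp add: mult_nonneg_nonpos)
qed


theorem lemma4p7:
  fixes m d :: nat and a c :: real
  assumes "m \<ge> 2" and "d \<ge> 1" and "a > 0" and "c > 0"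
  shows "(\<forall>i \<in> {1..d}. \<forall>k \<in> {1..m}.
            (Gmat c m d *\<^sub>v svec a m d) $ ((i - 1) + (k - 1) * d) = nval a c m d i)
       \<and> invertible_mat (1\<^sub>m (m choose 2) + (Pimat a m d)\<^sup>T * Gmat c m d * Pimat a m d)
       \<and> (\<forall>B. inverts_mat (1\<^sub>m (m choose 2) + (Pimat a m d)\<^sup>T * Gmat c m d * Pimat a m d) B \<and> inverts_mat B (1\<^sub>m (m choose 2) + (Pimat a m d)\<^sup>T * Gmat c m d * Pimat a m d) \<longrightarrow>
            (Gmat c m d - Gmat c m d * Pimat a m d * B * (Pimat a m d)\<^sup>T * Gmat c m d)
               *\<^sub>v svec a m d = Gmat c m d *\<^sub>v svec a m d)"
proof -
  note d = \<open>d \<ge> 1\<close>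
  define n where "n = m * d"
  define N where "N = m choose 2"
  define G where "G = Gmat c m d"
  define P where "P = Pimat a m d"
  define s where "s = svec a m d"
  define A where "A = 1\<^sub>m N + P\<^sup>T * G * P"
  have G: "G \<in> carrier_mat n n" unfolding G_def n_def by (rule G_carrier)
  have P: "P \<in> carrier_mat n N" unfolding P_def n_def N_def by (rule P_carrier)
  have s: "s \<in> carrier_vec n" unfolding s_def n_def by (rule s_carrier)
  have A: "A \<in> carrier_mat N N" unfolding A_def using G P by auto
  have part1: "\<forall>i \<in> {1..d}. \<forall>k \<in> {1..m}.
            (Gmat c m d *\<^sub>v svec a m d) $ ((i - 1) + (k - 1) * d) = nval a c m d i"
  proof (intro ballI)
    fix i k assume i: "i \<in> {1..d}" and k: "k \<in> {1..m}"
    have "(Gmat c m d *\<^sub>v svec a m d) $ ((i - 1) + (k - 1) * d) = nval a c m d (Suc (i - 1))"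
      using i k d by (intro Gs_val) auto
    thus "(Gmat c m d *\<^sub>v svec a m d) $ ((i - 1) + (k - 1) * d) = nval a c m d i" using i by simp
  qed
  have Gsm: "(G *\<^sub>v s) $ (k * d) = nval a c m d 1" if "k < m" for k
    using Gs_val[OF d _ that, of 0 c a] d unfolding G_def s_def by simp
  have PGs: "P\<^sup>T *\<^sub>v (G *\<^sub>v s) = 0\<^sub>v N"
  proof (rule eq_vecI)
    show "dim_vec (P\<^sup>T *\<^sub>v (G *\<^sub>v s)) = dim_vec (0\<^sub>v N)" using P by simp
    fix cc assume "cc < dim_vec (0\<^sub>v N)"
    hence cc: "cc < N" by simp
    have "(P\<^sup>T *\<^sub>v (G *\<^sub>v s)) $ cc = (\<Sum>r<n. P\<^sup>T $$ (cc,r) * (G *\<^sub>v s) $ r)"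
      by (rule mult_vec_sum) (use P G s cc in auto)
    also have "\<dots> = (\<Sum>r<n. P $$ (r,cc) * (G *\<^sub>v s) $ r)"
      using P cc by (intro sum.cong refl) auto
    also have "\<dots> = sqrt (a / real m) * ((G *\<^sub>v s) $ (fst (pairs_list m ! cc) * d) - (G *\<^sub>v s) $ (snd (pairs_list m ! cc) * d))"
      unfolding P_def n_def using col_sum[OF d cc[unfolded N_def]] by simp
    also have "\<dots> = 0" using pairs_nth[OF cc[unfolded N_def]] Gsm by simp
    finally show "(P\<^sup>T *\<^sub>v (G *\<^sub>v s)) $ cc = 0\<^sub>v N $ cc" using cc by simp
  qed
  have part3: "\<forall>B. inverts_mat A B \<and> inverts_mat B A \<longrightarrow>
     (G - G * P * B * P\<^sup>T * G) *\<^sub>v s = G *\<^sub>v s"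
  proof (intro allI impI)
    fix B assume inv: "inverts_mat A B \<and> inverts_mat B A"
    have "A * B = 1\<^sub>m N" using inv A unfolding inverts_mat_def by auto
    hence dc: "dim_col B = N" by (metis index_mult_mat(3) index_one_mat(3))
    have "B * A = 1\<^sub>m (dim_row B)" using inv unfolding inverts_mat_def by auto
    hence "dim_col (B * A) = dim_col (1\<^sub>m (dim_row B))" by simp
    hence dr: "dim_row B = N" using A by simp
    have B: "B \<in> carrier_mat N N" using dc dr by auto
    have "(G * P * B * P\<^sup>T * G) *\<^sub>v s = (G * P * B * P\<^sup>T) *\<^sub>v (G *\<^sub>v s)"
      using G P B s by (subst assoc_mult_mat_vec[of _ n n]) auto
    also have "\<dots> = (G * P * B) *\<^sub>v (P\<^sup>T *\<^sub>v (G *\<^sub>v s))"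
      using G P B s by (subst assoc_mult_mat_vec[of _ n N]) auto
    also have "\<dots> = 0\<^sub>v n" unfolding PGs using G P B by auto
    finally have z: "(G * P * B * P\<^sup>T * G) *\<^sub>v s = 0\<^sub>v n" .
    have "(G - G * P * B * P\<^sup>T * G) *\<^sub>v s = G *\<^sub>v s - (G * P * B * P\<^sup>T * G) *\<^sub>v s"
      using G P B s by (intro minus_mult_distrib_mat_vec) auto
    also have "\<dots> = G *\<^sub>v s" unfolding z using G s by auto
    finally show "(G - G * P * B * P\<^sup>T * G) *\<^sub>v s = G *\<^sub>v s" .
  qed
  have ker: "A *\<^sub>v v \<noteq> 0\<^sub>v N" if v: "v \<in> carrier_vec N" "v \<noteq> 0\<^sub>v N" for v
  proof
    assume Av: "A *\<^sub>v v = 0\<^sub>v N"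
    define w where "w = P *\<^sub>v v"
    have w: "w \<in> carrier_vec n" unfolding w_def using P v by auto
    have "A *\<^sub>v v = v + (P\<^sup>T * G * P) *\<^sub>v v"
      unfolding A_def using P G v by (subst add_mult_distrib_mat_vec[of _ N N]) auto
    also have "(P\<^sup>T * G * P) *\<^sub>v v = P\<^sup>T *\<^sub>v (G *\<^sub>v w)"
      unfolding w_def using P G v by (subst assoc_mult_mat_vec[of _ N n]) auto
    finally have Av2: "A *\<^sub>v v = v + P\<^sup>T *\<^sub>v (G *\<^sub>v w)" .
    have "0 = (A *\<^sub>v v) \<bullet> v" unfolding Av using v by simp
    also have "\<dots> = v \<bullet> v + (P\<^sup>T *\<^sub>v (G *\<^sub>v w)) \<bullet> v"
      unfolding Av2 using v P G w by (intro add_scalar_prod_distrib[of _ N]) auto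
    also have "(P\<^sup>T *\<^sub>v (G *\<^sub>v w)) \<bullet> v = (G *\<^sub>v w) \<bullet> w"
      unfolding w_def using P G v w[unfolded w_def] by (intro transpose_vec_mult_scalar) auto
    finally have eq0: "0 = v \<bullet> v + (G *\<^sub>v w) \<bullet> w" .
    have wsum: "(\<Sum>r<m*d. w $ r) = 0"
    proof -
      have "(\<Sum>r<n. w $ r) = (\<Sum>r<n. \<Sum>cc<N. P $$ (r,cc) * v $ cc)"
        unfolding w_def using P v by (intro sum.cong refl mult_vec_sum) auto
      also have "\<dots> = (\<Sum>cc<N. \<Sum>r<n. P $$ (r,cc) * v $ cc)" by (rule sum.swap)
      also have "\<dots> = (\<Sum>cc<N. 0)"
      proof (intro sum.cong refl)
        fix cc assume "cc \<in> {..<N}"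
        hence cc: "cc < m choose 2" unfolding N_def by simp
        show "(\<Sum>r<n. P $$ (r,cc) * v $ cc) = 0"
          using col_sum[OF d cc, of a "\<lambda>_. v $ cc"] unfolding P_def n_def by simp
      qed
      finally show ?thesis unfolding n_def by simp
    qed
    have "(G *\<^sub>v w) \<bullet> w = (\<Sum>x<m*d. (\<Sum>y<m*d. Gmat c m d $$ (x,y) * w $ y) * w $ x)"
    proof -
      have "(G *\<^sub>v w) \<bullet> w = (\<Sum>x<n. (G *\<^sub>v w) $ x * w $ x)"
        unfolding scalar_prod_def using w by (simp add: atLeast0LessThan)
      also have "\<dots> = (\<Sum>x<n. (\<Sum>y<n. G $$ (x,y) * w $ y) * w $ x)"
        by (intro sum.cong refl) (simp add: mult_vec_sum[OF G w])
      finally show ?thesis unfolding n_def G_def .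
    qed
    also have "\<dots> \<ge> 0" using G_quad[OF wsum \<open>c > 0\<close>] by simp
    finally have q: "(G *\<^sub>v w) \<bullet> w \<ge> 0" .
    have vv: "v \<bullet> v = (\<Sum>i<N. (v $ i)^2)"
      unfolding scalar_prod_def using v by (simp add: atLeast0LessThan power2_eq_square)
    have "(\<Sum>i<N. (v $ i)^2) = 0" using eq0 q vv
      by (smt (verit) sum_nonneg zero_le_power2)
    hence "\<forall>i\<in>{..<N}. (v $ i)^2 = 0" by (subst (asm) sum_nonneg_eq_0_iff) auto
    hence "v = 0\<^sub>v N" using v by (intro eq_vecI) auto
    with v show False by simp
  qed
  have "det A \<noteq> 0" using ker unfolding det_0_iff_vec_prod_zero[OF A] by blast
  from det_non_zero_imp_unit[OF A this, of "()"]
  obtain B where B: "B \<in> carrier_mat N N" "B * A = 1\<^sub>m N" "A * B = 1\<^sub>m N"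
    unfolding Units_def ring_mat_def by auto
  have part2: "invertible_mat A"
    unfolding invertible_mat_def inverts_mat_def using A B by (auto intro!: exI[of _ B])
  show ?thesis using part1 part2 part3
    unfolding A_def G_def P_def s_def N_def by blast
qed

end
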